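(* Let $\lambda\in[-1,1/d)$ and let $\gamma:I\to\mathbb{R}^d$ be a continuous $\lambda$-curve. Then there exists $\rho>0$ such that for every $t\in I$ and every $q\in\mathrm{sec}^+(t)$ there exists $\xi_t\in\mathbb{S}^{d-1}$ with $\langle\xi_t,u\rangle\le-\rho$ for all $u\in K(t)$ with $\|u\|=1$, and $\langle\xi_t,q\rangle\ge\rho$.
   Context: $\mathbb{R}^d$ carries the Euclidean inner product $\langle\cdot,\cdot\rangle$ and norm $\|\cdot\|$; $I\subset\mathbb{R}$ is an interval; $\mathbb{S}^{d-1}$ the unit sphere. $\gamma$ is a $\lambda$-curve if for all $t_1\le t_2\le t_3$ in $I$: $\|\gamma(t_1)-\gamma(t_2)\|\le\|\gamma(t_1)-\gamma(t_3)\|+\lambda\|\gamma(t_2)-\gamma(t_3)\|$. $K(t)$ is the closed convex cone generated by $\{\gamma(t')-\gamma(t): t'\in I, t'\le t\}$. $\mathrm{sec}^+(t)=\{q\in\mathbb{S}^{d-1}: q=\lim_k\frac{\gamma(t_k)-\gamma(t)}{\|\gamma(t_k)-\gamma(t)\|}$ for some $t_k\to t$, $t_k>t\}$. *)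

theory Defs
  imports "HOL-Analysis.Analysis"
begin

definition lambda_curve :: "real \<Rightarrow> real set \<Rightarrow> (real \<Rightarrow> 'a::euclidean_space) \<Rightarrow> bool" where
  "lambda_curve lam I \<gamma> \<longleftrightarrow>
     (\<forall>t1\<in>I. \<forall>t2\<in>I. \<forall>t3\<in>I. t1 \<le> t2 \<longrightarrow> t2 \<le> t3 \<longrightarrow>
        norm (\<gamma> t1 - \<gamma> t2) \<le> norm (\<gamma> t1 - \<gamma> t3) + lam * norm (\<gamma> t2 - \<gamma> t3))"

definition backcone :: "real set \<Rightarrow> (real \<Rightarrow> 'a::euclidean_space) \<Rightarrow> real \<Rightarrow> 'a set" where
  "backcone I \<gamma> t = closure (convex_cone hull {\<gamma> t' - \<gamma> t | t'. t' \<in> I \<and> t' \<le> t})"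

definition sec_plus :: "real set \<Rightarrow> (real \<Rightarrow> 'a::euclidean_space) \<Rightarrow> real \<Rightarrow> 'a set" where
  "sec_plus I \<gamma> t = {q \<in> sphere 0 1. \<exists>tk::nat \<Rightarrow> real.
      (\<forall>k. tk k \<in> I \<and> tk k > t \<and> \<gamma> (tk k) \<noteq> \<gamma> t) \<and> tk \<longlonglongrightarrow> t \<and>
      (\<lambda>k. (\<gamma> (tk k) - \<gamma> t) /\<^sub>R norm (\<gamma> (tk k) - \<gamma> t)) \<longlonglongrightarrow> q}"

end

theory Submission
  imports Defs
begin

lemma hull_sq_bound:
  fixes S :: "'a::euclidean_space set" and lam :: real
  assumes unit: "\<And>x. x \<in> S \<Longrightarrow> norm x = 1"
    and pair: "\<And>x y. x \<in> S \<Longrightarrow> y \<in> S \<Longrightarrow> x \<noteq> y \<Longrightarrow> inner x y \<ge> - lam"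
    and lam: "-1 \<le> lam"
    and v: "v \<in> convex hull S"
  shows "(1 - lam * real DIM('a)) / (real DIM('a) + 1) \<le> (norm v)\<^sup>2"
proof -
  obtain T where T: "finite T" "T \<subseteq> S" "card T \<le> DIM('a) + 1" "v \<in> convex hull T"
    using v caratheodory by blast
  then obtain c where c: "\<forall>x\<in>T. 0 \<le> c x" "sum c T = 1" "(\<Sum>x\<in>T. c x *\<^sub>R x) = v"
    using convex_hull_finite[OF T(1)] by auto
  have Tne: "T \<noteq> {}" using c(2) by auto
  hence cardpos: "card T > 0" using T(1) by (simp add: card_gt_0_iff)
  have "(norm v)\<^sup>2 = inner v v" by (simp add: power2_norm_eq_inner)
  also have "\<dots> = (\<Sum>x\<in>T. \<Sum>y\<in>T. c x * c y * inner x y)"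
    unfolding c(3)[symmetric] by (simp add: inner_sum_left inner_sum_right sum_distrib_left algebra_simps, intro sum.cong refl, simp add: inner_commute)
  also have "\<dots> \<ge> (\<Sum>x\<in>T. \<Sum>y\<in>T. c x * c y * (if x = y then 1 else - lam))"
  proof (intro sum_mono)
    fix x y assume xy: "x \<in> T" "y \<in> T"
    have "0 \<le> c x * c y" using c(1) xy by simp
    moreover have "(if x = y then 1 else - lam) \<le> inner x y"
      using xy T(2) unit pair by (auto simp: dot_square_norm subset_iff)
    ultimately show "c x * c y * (if x = y then 1 else - lam) \<le> c x * c y * inner x y"
      by (simp add: mult_left_mono)
  qed
  finally have A: "(\<Sum>x\<in>T. \<Sum>y\<in>T. c x * c y * (if x = y then 1 else - lam)) \<le> (norm v)\<^sup>2" .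
  have B: "(\<Sum>x\<in>T. \<Sum>y\<in>T. c x * c y * (if x = y then 1 else - lam))
        = (\<Sum>x\<in>T. \<Sum>y\<in>T. c x * c y * (- lam)) + (\<Sum>x\<in>T. \<Sum>y\<in>T. c x * c y * (if x = y then 1 + lam else 0))"
    by (simp add: sum.distrib[symmetric] algebra_simps, intro sum.cong refl, simp add: algebra_simps)
  have B1: "(\<Sum>x\<in>T. \<Sum>y\<in>T. c x * c y * (- lam)) = - lam"
  proof -
    have "(\<Sum>x\<in>T. \<Sum>y\<in>T. c x * c y * (- lam)) = (\<Sum>x\<in>T. c x * ((\<Sum>y\<in>T. c y) * (- lam)))"
      by (simp add: sum_distrib_left sum_distrib_right mult.assoc sum_negf)
    also have "\<dots> = (\<Sum>x\<in>T. c x) * (- lam)" using c(2) by (simp add: sum_distrib_right[symmetric] sum_negf)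
    finally show ?thesis using c(2) by simp
  qed
  have B2: "(\<Sum>x\<in>T. \<Sum>y\<in>T. c x * c y * (if x = y then 1 + lam else 0)) = (1 + lam) * (\<Sum>x\<in>T. (c x)\<^sup>2)"
    using T(1) by (simp add: sum_distrib_left power2_eq_square if_distrib sum.delta mult.commute cong: if_cong)
  have CS: "1 \<le> real (card T) * (\<Sum>x\<in>T. (c x)\<^sup>2)"
    using Cauchy_Schwarz_ineq_sum[of c "\<lambda>_. 1" T] c(2) by (simp add: mult.commute)
  have "(1 + lam) / (real DIM('a) + 1) \<le> (1 + lam) * (\<Sum>x\<in>T. (c x)\<^sup>2)"
  proof -
    have "1 / (real DIM('a) + 1) \<le> 1 / real (card T)"
      using T(3) cardpos by (simp add: frac_le)
    also have "\<dots> \<le> (\<Sum>x\<in>T. (c x)\<^sup>2)" using CS cardpos by (simp add: divide_le_eq mult.commute)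
    finally have "1 / (real DIM('a) + 1) \<le> (\<Sum>x\<in>T. (c x)\<^sup>2)" .
    hence "(1 + lam) * (1 / (real DIM('a) + 1)) \<le> (1 + lam) * (\<Sum>x\<in>T. (c x)\<^sup>2)"
      using lam by (intro mult_left_mono) auto
    thus ?thesis by simp
  qed
  moreover have "(1 - lam * real DIM('a)) / (real DIM('a) + 1) = (1 + lam) / (real DIM('a) + 1) - lam"
    by (simp add: field_simps)
  ultimately show ?thesis using A B B1 B2 by linarith
qed

lemma hull_sep:
  fixes S :: "'a::euclidean_space set" and lam :: real
  assumes unit: "\<And>x. x \<in> S \<Longrightarrow> norm x = 1"
    and pair: "\<And>x y. x \<in> S \<Longrightarrow> y \<in> S \<Longrightarrow> x \<noteq> y \<Longrightarrow> inner x y \<ge> - lam"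
    and lam: "-1 \<le> lam" "lam < 1 / real DIM('a)"
    and ne: "S \<noteq> {}"
  shows "\<exists>\<xi>\<in>sphere 0 1. \<forall>v\<in>convex hull S.
           inner \<xi> v \<le> - (sqrt ((1 - lam * real DIM('a)) / (real DIM('a) + 1)) / 2)"
proof -
  define \<delta> where "\<delta> = (1 - lam * real DIM('a)) / (real DIM('a) + 1)"
  define r where "r = sqrt \<delta>"
  have "lam * real DIM('a) < 1" using lam(2) by (simp add: less_divide_eq mult.commute)
  hence dpos: "\<delta> > 0" unfolding \<delta>_def by simp
  hence rpos: "r > 0" unfolding r_def by simp
  have normv: "norm v \<ge> r" if "v \<in> convex hull S" for v
  proof -
    have "\<delta> \<le> (norm v)\<^sup>2" using hull_sq_bound[OF unit pair lam(1) that] unfolding \<delta>_def by blast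
    hence "sqrt \<delta> \<le> sqrt ((norm v)\<^sup>2)" by (rule real_sqrt_le_mono)
    thus ?thesis unfolding r_def by simp
  qed
  have disj: "cball 0 (r/2) \<inter> convex hull S = {}"
    using normv rpos by (force simp: dist_norm)
  obtain a b where ab: "a \<noteq> 0" "\<forall>x\<in>cball 0 (r/2). inner a x \<le> b" "\<forall>x\<in>convex hull S. inner a x \<ge> b"
    using separating_hyperplane_sets[of "cball 0 (r/2)" "convex hull S"] disj ne rpos
    by (auto simp: convex_convex_hull)
  have "(r/2 / norm a) *\<^sub>R a \<in> cball 0 (r/2)" using rpos ab(1) by simp
  hence "inner a ((r/2 / norm a) *\<^sub>R a) \<le> b" using ab(2) by blast
  hence bge: "r/2 * norm a \<le> b" using ab(1) by (simp add: dot_square_norm power2_eq_square)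
  define \<xi> where "\<xi> = - ((1 / norm a) *\<^sub>R a)"
  have "\<xi> \<in> sphere 0 1" using ab(1) unfolding \<xi>_def by simp
  moreover have "inner \<xi> v \<le> - (r/2)" if "v \<in> convex hull S" for v
  proof -
    have "b \<le> inner a v" using ab(3) that by blast
    hence "r/2 * norm a \<le> inner a v" using bge by linarith
    hence "r/2 \<le> inner a v / norm a" using ab(1) by (simp add: le_divide_eq)
    thus ?thesis unfolding \<xi>_def by simp
  qed
  ultimately show ?thesis unfolding r_def \<delta>_def by blast
qed

lemma alg_pair:
  fixes u1 u2 :: "'a::real_inner"
  assumes h: "norm (u1 - u2) \<le> norm u1 + lam * norm u2" and l: "lam\<^sup>2 \<le> 1"
  shows "inner u1 u2 \<ge> - lam * norm u1 * norm u2"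
proof -
  have "0 \<le> norm u1 + lam * norm u2" using h norm_ge_zero order_trans by blast
  hence "(norm (u1 - u2))\<^sup>2 \<le> (norm u1 + lam * norm u2)\<^sup>2"
    using h by (intro power_mono) auto
  moreover have "(norm (u1 - u2))\<^sup>2 = (norm u1)\<^sup>2 - 2 * inner u1 u2 + (norm u2)\<^sup>2"
    by (simp add: power2_norm_eq_inner inner_diff_left inner_diff_right inner_commute)
  ultimately have "(norm u1)\<^sup>2 - 2 * inner u1 u2 + (norm u2)\<^sup>2 \<le> (norm u1)\<^sup>2 + 2 * lam * norm u1 * norm u2 + lam\<^sup>2 * (norm u2)\<^sup>2"
    by (simp add: power2_eq_square algebra_simps)
  moreover have "lam\<^sup>2 * (norm u2)\<^sup>2 \<le> (norm u2)\<^sup>2" using mult_right_mono[OF l, of "(norm u2)\<^sup>2"] by simp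
  ultimately show ?thesis by linarith
qed

lemma alg_q:
  fixes u b :: "'a::real_inner"
  assumes h: "norm u \<le> norm (u - b) + lam * norm b" and pos: "lam * norm b \<le> norm u"
  shows "inner u b \<le> lam * norm u * norm b + (1 - lam\<^sup>2) * (norm b)\<^sup>2 / 2"
proof -
  have "(norm u - lam * norm b)\<^sup>2 \<le> (norm (u - b))\<^sup>2"
    using h pos by (intro power_mono) auto
  moreover have "(norm (u - b))\<^sup>2 = (norm u)\<^sup>2 - 2 * inner u b + (norm b)\<^sup>2"
    by (simp add: power2_norm_eq_inner inner_diff_left inner_diff_right inner_commute)
  ultimately have "2 * inner u b \<le> 2 * lam * norm u * norm b + (1 - lam\<^sup>2) * (norm b)\<^sup>2"
    by (simp add: power2_eq_square algebra_simps)
  thus ?thesis by (simp add: field_simps)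
qed

lemma past_pair:
  fixes \<gamma> :: "real \<Rightarrow> 'a::euclidean_space"
  assumes lc: "lambda_curve lam I \<gamma>" and l: "lam\<^sup>2 \<le> 1"
    and I: "t1 \<in> I" "t2 \<in> I" "t \<in> I" and o: "t1 \<le> t2" "t2 \<le> t"
    and nz: "\<gamma> t1 \<noteq> \<gamma> t" "\<gamma> t2 \<noteq> \<gamma> t"
  shows "inner ((\<gamma> t1 - \<gamma> t) /\<^sub>R norm (\<gamma> t1 - \<gamma> t)) ((\<gamma> t2 - \<gamma> t) /\<^sub>R norm (\<gamma> t2 - \<gamma> t)) \<ge> - lam"
proof -
  define u1 where "u1 = \<gamma> t1 - \<gamma> t"
  define u2 where "u2 = \<gamma> t2 - \<gamma> t"
  have h0: "norm (\<gamma> t1 - \<gamma> t2) \<le> norm (\<gamma> t1 - \<gamma> t) + lam * norm (\<gamma> t2 - \<gamma> t)"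
    using lc[unfolded lambda_curve_def, rule_format, OF I(1) I(2) I(3) o] .
  have "u1 - u2 = \<gamma> t1 - \<gamma> t2" unfolding u1_def u2_def by simp
  hence h: "norm (u1 - u2) \<le> norm u1 + lam * norm u2" using h0 unfolding u1_def u2_def by simp
  have "inner u1 u2 \<ge> - lam * norm u1 * norm u2" by (rule alg_pair[OF h l])
  moreover have "norm u1 > 0" "norm u2 > 0" using nz unfolding u1_def u2_def by auto
  ultimately have "inner u1 u2 / (norm u1 * norm u2) \<ge> - lam"
    by (simp add: le_divide_eq)
  thus ?thesis unfolding u1_def[symmetric] u2_def[symmetric] by (simp add: divide_inverse mult_ac)
qed

lemma frac_aux:
  fixes A B C lam :: real
  assumes "A > 0" "B > 0"
  shows "(lam * A * B + C * B\<^sup>2 / 2) / (A * B) = lam + C * B / (2 * A)"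
proof -
  have "(lam * A * B + C * B\<^sup>2 / 2) / (A * B) = lam * A * B / (A * B) + C * B\<^sup>2 / 2 / (A * B)"
    by (rule add_divide_distrib)
  also have "lam * A * B / (A * B) = lam" using assms by simp
  also have "C * B\<^sup>2 / 2 / (A * B) = C * B / (2 * A)" using assms by (simp add: power2_eq_square)
  finally show ?thesis .
qed

lemma past_q:
  fixes \<gamma> :: "real \<Rightarrow> 'a::euclidean_space"
  assumes lc: "lambda_curve lam I \<gamma>" and l: "lam\<^sup>2 \<le> 1" and cont: "continuous_on I \<gamma>"
    and I: "t' \<in> I" "t \<in> I" and o: "t' \<le> t"
    and nz: "\<gamma> t' \<noteq> \<gamma> t" and q: "q \<in> sec_plus I \<gamma> t"
  shows "inner ((\<gamma> t' - \<gamma> t) /\<^sub>R norm (\<gamma> t' - \<gamma> t)) q \<le> lam"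
proof -
  obtain tk where tk: "\<And>k. tk k \<in> I" "\<And>k. tk k > t" "\<And>k. \<gamma> (tk k) \<noteq> \<gamma> t" "tk \<longlonglongrightarrow> t"
    "(\<lambda>k. (\<gamma> (tk k) - \<gamma> t) /\<^sub>R norm (\<gamma> (tk k) - \<gamma> t)) \<longlonglongrightarrow> q"
    using q unfolding sec_plus_def by blast
  define u where "u = \<gamma> t' - \<gamma> t"
  define b where "b k = \<gamma> (tk k) - \<gamma> t" for k
  have nu: "norm u > 0" using nz unfolding u_def by simp
  have nb: "norm (b k) > 0" for k using tk(3) unfolding b_def by simp
  have "(\<gamma> \<circ> tk) \<longlonglongrightarrow> \<gamma> t"
    using cont I(2) tk(1,4) unfolding continuous_on_sequentially by blast
  hence "(\<lambda>k. \<gamma> (tk k) - \<gamma> t) \<longlonglongrightarrow> \<gamma> t - \<gamma> t"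
    by (intro tendsto_diff) (auto simp: o_def)
  hence "b \<longlonglongrightarrow> 0" unfolding b_def by simp
  hence nb0: "(\<lambda>k. norm (b k)) \<longlonglongrightarrow> 0" using tendsto_norm_zero by blast
  have ev: "eventually (\<lambda>k. norm (b k) < norm u / (\<bar>lam\<bar> + 1)) sequentially"
    using nb0 nu by (intro order_tendstoD) auto
  have "eventually (\<lambda>k. inner (u /\<^sub>R norm u) (b k /\<^sub>R norm (b k)) \<le> lam + (1 - lam\<^sup>2) * norm (b k) / (2 * norm u)) sequentially"
    using ev
  proof eventually_elim
    case (elim k)
    have "lam * norm (b k) \<le> \<bar>lam\<bar> * norm (b k)" by (simp add: mult_right_mono)
    also have "\<dots> \<le> (\<bar>lam\<bar> + 1) * norm (b k)" by (simp add: distrib_right)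
    also have "\<dots> \<le> norm u" proof -
      have "0 < \<bar>lam\<bar> + 1" by (simp add: add_nonneg_pos)
      thus ?thesis using elim by (simp add: less_divide_eq mult.commute)
    qed
    finally have pos: "lam * norm (b k) \<le> norm u" .
    have h0: "norm (\<gamma> t' - \<gamma> t) \<le> norm (\<gamma> t' - \<gamma> (tk k)) + lam * norm (\<gamma> t - \<gamma> (tk k))"
      using lc[unfolded lambda_curve_def, rule_format, OF I(1) I(2) tk(1)[of k] o less_imp_le[OF tk(2)[of k]]] .
    have e1: "u - b k = \<gamma> t' - \<gamma> (tk k)" unfolding u_def b_def by simp
    have e2: "norm (\<gamma> t - \<gamma> (tk k)) = norm (b k)" unfolding b_def by (simp add: norm_minus_commute)
    have e3: "norm (\<gamma> t' - \<gamma> t) = norm u" unfolding u_def ..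
    have h: "norm u \<le> norm (u - b k) + lam * norm (b k)" using h0 unfolding e1 e2 e3 .
    have "inner u (b k) \<le> lam * norm u * norm (b k) + (1 - lam\<^sup>2) * (norm (b k))\<^sup>2 / 2"
      by (rule alg_q[OF h pos])
    hence "inner u (b k) / (norm u * norm (b k)) \<le> (lam * norm u * norm (b k) + (1 - lam\<^sup>2) * (norm (b k))\<^sup>2 / 2) / (norm u * norm (b k))"
      using nu nb[of k] by (intro divide_right_mono) auto
    also have "\<dots> = lam + (1 - lam\<^sup>2) * norm (b k) / (2 * norm u)"
      using nu nb[of k] by (rule frac_aux)
    finally have fin: "inner u (b k) / (norm u * norm (b k)) \<le> lam + (1 - lam\<^sup>2) * norm (b k) / (2 * norm u)" .
    have "inner (u /\<^sub>R norm u) (b k /\<^sub>R norm (b k)) = inverse (norm u) * (inverse (norm (b k)) * inner u (b k))"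
      by (simp only: inner_scaleR_left inner_scaleR_right divide_inverse_commute scaleR_conv_of_real of_real_def)
        (rule mult.left_commute)
    also have "\<dots> = inner u (b k) / (norm u * norm (b k))"
      by (simp only: divide_inverse inverse_mult_distrib mult_ac)
    finally show ?case using fin by (simp only:)
  qed
  moreover have "(\<lambda>k. inner (u /\<^sub>R norm u) (b k /\<^sub>R norm (b k))) \<longlonglongrightarrow> inner (u /\<^sub>R norm u) q"
    using tk(5) unfolding b_def by (intro tendsto_intros)
  moreover have "(\<lambda>k. lam + (1 - lam\<^sup>2) * norm (b k) / (2 * norm u)) \<longlonglongrightarrow> lam + (1 - lam\<^sup>2) * 0 / (2 * norm u)"
    using nu by (intro tendsto_intros nb0) auto
  ultimately have "inner (u /\<^sub>R norm u) q \<le> lam + (1 - lam\<^sup>2) * 0 / (2 * norm u)"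
    by (intro tendsto_le[OF trivial_limit_sequentially]) auto
  thus ?thesis unfolding u_def by simp
qed


theorem lemma3p4:
  fixes \<gamma> :: "real \<Rightarrow> 'a::euclidean_space" and I :: "real set" and lam :: real
  assumes "is_interval I"
    and "-1 \<le> lam" and "lam < 1 / real DIM('a)"
    and "continuous_on I \<gamma>"
    and "lambda_curve lam I \<gamma>"
  shows "\<exists>\<rho>>0. \<forall>t\<in>I. \<forall>q\<in>sec_plus I \<gamma> t. \<exists>\<xi>\<in>sphere 0 1.
           (\<forall>u\<in>backcone I \<gamma> t. norm u = 1 \<longrightarrow> inner \<xi> u \<le> - \<rho>) \<and> inner \<xi> q \<ge> \<rho>"
proof -
  define \<rho> where "\<rho> = sqrt ((1 - lam * real DIM('a)) / (real DIM('a) + 1)) / 2"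
  have "lam * real DIM('a) < 1" using assms(3) by (simp add: less_divide_eq mult.commute)
  hence rpos: "\<rho> > 0" unfolding \<rho>_def by simp
  have "1 / real DIM('a) \<le> 1" by simp
  hence lam1: "lam \<le> 1" using assms(3) by linarith
  have l2: "lam\<^sup>2 \<le> 1"
  proof -
    have "\<bar>lam\<bar> \<le> 1" using assms(2) lam1 by linarith
    hence "\<bar>lam\<bar>\<^sup>2 \<le> 1" by (intro power_le_one) auto
    thus ?thesis by simp
  qed
  have "\<forall>t\<in>I. \<forall>q\<in>sec_plus I \<gamma> t. \<exists>\<xi>\<in>sphere 0 1.
           (\<forall>u\<in>backcone I \<gamma> t. norm u = 1 \<longrightarrow> inner \<xi> u \<le> - \<rho>) \<and> inner \<xi> q \<ge> \<rho>"
  proof (intro ballI)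
    fix t q assume t: "t \<in> I" and q: "q \<in> sec_plus I \<gamma> t"
    have qn: "norm q = 1" using q unfolding sec_plus_def by simp
    define U where "U = (\<lambda>t'. (\<gamma> t' - \<gamma> t) /\<^sub>R norm (\<gamma> t' - \<gamma> t)) ` {t'. t' \<in> I \<and> t' \<le> t \<and> \<gamma> t' \<noteq> \<gamma> t}"
    define S where "S = insert (- q) U"
    have unit: "norm x = 1" if "x \<in> S" for x
      using that qn unfolding S_def U_def by auto
    have pairU: "inner x y \<ge> - lam" if xU: "x \<in> U" and yU: "y \<in> U" for x y
    proof -
      obtain t1 where t1: "t1 \<in> I" "t1 \<le> t" "\<gamma> t1 \<noteq> \<gamma> t" "x = (\<gamma> t1 - \<gamma> t) /\<^sub>R norm (\<gamma> t1 - \<gamma> t)"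
        using xU unfolding U_def by auto
      obtain t2 where t2: "t2 \<in> I" "t2 \<le> t" "\<gamma> t2 \<noteq> \<gamma> t" "y = (\<gamma> t2 - \<gamma> t) /\<^sub>R norm (\<gamma> t2 - \<gamma> t)"
        using yU unfolding U_def by auto
      show ?thesis
      proof (cases "t1 \<le> t2")
        case True
        thus ?thesis using past_pair[OF assms(5) l2 t1(1) t2(1) t True t2(2) t1(3) t2(3)] t1(4) t2(4) by simp
      next
        case False
        hence "t2 \<le> t1" by simp
        thus ?thesis using past_pair[OF assms(5) l2 t2(1) t1(1) t _ t1(2) t2(3) t1(3)] t1(4) t2(4)
          by (simp add: inner_commute)
      qed
    qed
    have pairq: "inner x (- q) \<ge> - lam" if xU: "x \<in> U" for x
    proof -
      obtain t1 where t1: "t1 \<in> I" "t1 \<le> t" "\<gamma> t1 \<noteq> \<gamma> t" "x = (\<gamma> t1 - \<gamma> t) /\<^sub>R norm (\<gamma> t1 - \<gamma> t)"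
        using xU unfolding U_def by auto
      show ?thesis using past_q[OF assms(5) l2 assms(4) t1(1) t t1(2) t1(3) q] t1(4) by simp
    qed
    have pair: "inner x y \<ge> - lam" if "x \<in> S" "y \<in> S" "x \<noteq> y" for x y
    proof -
      have "x \<in> U \<or> x = - q" "y \<in> U \<or> y = - q" using that(1,2) unfolding S_def by auto
      moreover have "inner y (- q) = inner (- q) y" by (rule inner_commute)
      ultimately show ?thesis using that(3) pairU pairq[of x] pairq[of y] by auto
    qed
    obtain \<xi> where xi: "\<xi> \<in> sphere 0 1" "\<And>v. v \<in> convex hull S \<Longrightarrow> inner \<xi> v \<le> - \<rho>"
    proof -
      have "\<exists>\<xi>\<in>sphere 0 1. \<forall>v\<in>convex hull S. inner \<xi> v \<le> - \<rho>"
      proof -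
        have "S \<noteq> {}" unfolding S_def by blast
        from hull_sep[of S lam, OF unit pair assms(2,3) this] show ?thesis unfolding \<rho>_def .
      qed
      thus ?thesis using that by blast
    qed
    have Sh: "x \<in> convex hull S" if xS: "x \<in> S" for x using xS by (rule hull_inc)
    define W where "W = {u. inner \<xi> u \<le> - \<rho> * norm u}"
    have cW: "convex_cone W" unfolding convex_cone_iff
    proof (intro conjI ballI allI impI)
      show "0 \<in> W" unfolding W_def by simp
    next
      fix x y assume xW: "x \<in> W" and yW: "y \<in> W"
      have ix: "inner \<xi> x \<le> - \<rho> * norm x" using xW unfolding W_def by simp
      have iy: "inner \<xi> y \<le> - \<rho> * norm y" using yW unfolding W_def by simp
      have "inner \<xi> (x + y) = inner \<xi> x + inner \<xi> y" by (rule inner_add_right)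
      have "\<rho> * norm (x + y) \<le> \<rho> * (norm x + norm y)"
        using rpos norm_triangle_ineq[of x y] by (intro mult_left_mono) auto
      hence "- \<rho> * (norm x + norm y) \<le> - \<rho> * norm (x + y)" by linarith
      moreover have "- \<rho> * (norm x + norm y) = - \<rho> * norm x + - \<rho> * norm y" by (rule distrib_left)
      ultimately have "inner \<xi> (x + y) \<le> - \<rho> * norm (x + y)"
        using ix iy \<open>inner \<xi> (x + y) = inner \<xi> x + inner \<xi> y\<close> by linarith
      thus "x + y \<in> W" unfolding W_def by simp
    next
      fix x :: 'a and c :: real assume xW: "x \<in> W" and c: "0 \<le> c"
      have ix: "inner \<xi> x \<le> - \<rho> * norm x" using xW unfolding W_def by simp
      have "inner \<xi> (c *\<^sub>R x) = c * inner \<xi> x" by (rule inner_scaleR_right)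
      also have "\<dots> \<le> c * (- \<rho> * norm x)" using ix c by (rule mult_left_mono)
      also have "\<dots> = - \<rho> * norm (c *\<^sub>R x)" using c by simp
      finally show "c *\<^sub>R x \<in> W" unfolding W_def by simp
    qed
    have clW: "closed W" unfolding W_def
      by (intro closed_Collect_le continuous_intros)
    have PW: "{\<gamma> t' - \<gamma> t | t'. t' \<in> I \<and> t' \<le> t} \<subseteq> W"
    proof
      fix p assume "p \<in> {\<gamma> t' - \<gamma> t | t'. t' \<in> I \<and> t' \<le> t}"
      then obtain t' where t': "t' \<in> I" "t' \<le> t" "p = \<gamma> t' - \<gamma> t" by blast
      show "p \<in> W"
      proof (cases "\<gamma> t' = \<gamma> t")
        case True thus ?thesis using t' unfolding W_def by simp
      next
        case False
        define e where "e = p /\<^sub>R norm p"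
        have "e \<in> U" unfolding U_def e_def t'(3) using t' False by (intro imageI) simp
        hence "e \<in> S" unfolding S_def by simp
        hence ie: "inner \<xi> e \<le> - \<rho>" using xi(2) Sh by blast
        have np: "norm p > 0" using False t' by simp
        have "p = norm p *\<^sub>R e" unfolding e_def using np by simp
        hence "inner \<xi> p = norm p * inner \<xi> e" by (metis inner_scaleR_right)
        also have "\<dots> \<le> norm p * (- \<rho>)" using ie np by (intro mult_left_mono) auto
        finally show ?thesis unfolding W_def by (simp add: mult.commute)
      qed
    qed
    have KW: "backcone I \<gamma> t \<subseteq> W"
      unfolding backcone_def
      by (intro closure_minimal clW hull_minimal[where S=convex_cone, OF PW cW])
    show "\<exists>\<xi>\<in>sphere 0 1. (\<forall>u\<in>backcone I \<gamma> t. norm u = 1 \<longrightarrow> inner \<xi> u \<le> - \<rho>) \<and> inner \<xi> q \<ge> \<rho>"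
    proof (intro bexI[OF _ xi(1)] conjI ballI impI)
      fix u assume "u \<in> backcone I \<gamma> t" "norm u = 1"
      hence "u \<in> W" "norm u = 1" using KW by blast+
      thus "inner \<xi> u \<le> - \<rho>" unfolding W_def by simp
    next
      have "- q \<in> S" unfolding S_def by simp
      hence "inner \<xi> (- q) \<le> - \<rho>" by (intro xi(2) Sh)
      thus "inner \<xi> q \<ge> \<rho>" by simp
    qed
  qed
  note main = this
  show ?thesis by (rule exI[where x=\<rho>], rule conjI[OF rpos main])
qed

end
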